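(* Let $b \ge 2$ and $k \ge 1$ be integers. Let $m\ge 1$ be an integer with $\gcd(m,b)=1$, and let $r$ be an integer with $0\le r<m$. Then there exist infinitely many positive integers $n$ with $n\equiv r\pmod m$ that are $b^{\ell}$-Niven for all $\ell$ with $1\le \ell\le k$. Moreover, for every $s_0\ge 1$ there exists such an $n$ with \[ \mathsf{s}_b(n)=\mathsf{s}_{b^2}(n)=\cdots = \mathsf{s}_{b^k}(n)\ge s_0. \]
   Context: For an integer base $g\ge 2$ and a positive integer $c$ with base-$g$ expansion $c=\sum_{i=0}^{L} d_i g^i$, $d_i\in\{0,1,\dots,g-1\}$, $d_L\neq 0$, the base-$g$ digit sum is $\mathsf{s}_g(c)=\sum_{i=0}^L d_i$. A positive integer $c$ is called $g$-Niven if $\mathsf{s}_g(c)\mid c$. *)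

theory Defs
  imports Main
begin

fun digit_sum :: "nat \<Rightarrow> nat \<Rightarrow> nat" where
  "digit_sum g c = (if g < 2 \<or> c = 0 then 0 else c mod g + digit_sum g (c div g))"

declare digit_sum.simps[simp del]

definition niven :: "nat \<Rightarrow> nat \<Rightarrow> bool" where
  "niven g c \<longleftrightarrow> c > 0 \<and> digit_sum g c dvd c"

end

theory Submission
  imports Defs "HOL-Number_Theory.Number_Theory"
begin

lemma ds0[simp]: "digit_sum g 0 = 0"
  by (simp add: digit_sum.simps)

lemma ds_step:
  assumes "g \<ge> 2" "a < g"
  shows "digit_sum g (a + g * y) = a + digit_sum g y"
proof (cases "a + g * y = 0")
  case True
  then have "a = 0" "y = 0" using assms by auto
  then show ?thesis by (simp add: digit_sum.simps)
next
  case False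
  then show ?thesis using assms
    by (subst digit_sum.simps) simp
qed

lemma ds_mult_pow:
  assumes "g \<ge> 2"
  shows "digit_sum g (g ^ q * y) = digit_sum g y"
proof (induction q)
  case 0 then show ?case by simp
next
  case (Suc q)
  have "digit_sum g (g ^ Suc q * y) = digit_sum g (0 + g * (g ^ q * y))"
    by (simp add: mult.assoc)
  also have "\<dots> = digit_sum g (g ^ q * y)"
    using ds_step[OF assms, of 0] assms by simp
  finally show ?case using Suc by simp
qed

lemma ds_sum:
  assumes "g \<ge> 2" "q \<ge> 1"
  shows "digit_sum g (\<Sum>i<s. g ^ (q * i)) = s"
proof (induction s)
  case 0 then show ?case by (simp add: digit_sum.simps)
next
  case (Suc s)
  have e: "(\<Sum>i<Suc s. g ^ (q * i)) = 1 + g * (g ^ (q - 1) * (\<Sum>i<s. g ^ (q * i)))"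
  proof -
    have "(\<Sum>i<Suc s. g ^ (q * i)) = 1 + (\<Sum>i<s. g ^ (q * Suc i))"
      by (subst sum.lessThan_Suc_shift) simp
    also have "(\<Sum>i<s. g ^ (q * Suc i)) = (\<Sum>i<s. g ^ q * g ^ (q * i))"
      by (simp add: power_add)
    also have "\<dots> = g ^ q * (\<Sum>i<s. g ^ (q * i))"
      by (simp add: sum_distrib_left)
    also have "g ^ q = g * g ^ (q - 1)" using assms
      by (metis One_nat_def Suc_pred' less_eq_Suc_le power_Suc)
    finally show ?thesis by (simp add: mult.assoc)
  qed
  show ?case
    unfolding e using assms ds_step[OF assms(1), of 1] ds_mult_pow[OF assms(1)] Suc
    by simp
qed

lemma main:
  fixes b k m r :: nat
  assumes "b \<ge> 2" and "k \<ge> 1" and "m \<ge> 1" and "coprime m b" and "r < m"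
  shows "\<exists>n. n \<ge> s0 \<and> n > 0 \<and> n mod m = r \<and> (\<forall>l\<in>{1..k}. niven (b ^ l) n)
            \<and> (\<forall>l\<in>{1..k}. digit_sum (b ^ l) n = digit_sum b n) \<and> digit_sum b n \<ge> s0"
proof -
  have cbm: "coprime b m" using assms(4) by (simp add: ac_simps)
  obtain x where x1: "[x = 1] (mod b)" and x2: "[x = r] (mod m)"
    using binary_chinese_remainder_nat[OF cbm] by blast
  define s where "s = x + b * m * (s0 + 1)"
  have s_ge: "s \<ge> s0 + 1"
  proof -
    have "b * m \<ge> 1" using assms by simp
    then have "b * m * (s0 + 1) \<ge> 1 * (s0 + 1)" by (rule mult_le_mono1)
    then show ?thesis unfolding s_def by simp
  qed
  have "[s = x] (mod b)" unfolding s_def cong_def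
    by (metis mod_mult_self2 mult.assoc mult.commute)
  then have "[s = 1] (mod b)" using x1 by (rule cong_trans)
  then have cs: "coprime s b"
    by (metis cong_imp_coprime cong_sym coprime_1_left)
  have "[s = x] (mod m)" unfolding s_def cong_def
    by (metis mod_mult_self2 mult.assoc mult.commute)
  then have sm: "[s = r] (mod m)" using x2 by (rule cong_trans)
  have cbsm: "coprime b (s * m)" using cs cbm
    by (simp add: ac_simps)
  define E where "E = fact k * totient (s * m)"
  have Epos: "E > 0" unfolding E_def using s_ge assms by simp
  have bE: "[b ^ E = 1] (mod s * m)"
  proof -
    have "[b ^ totient (s*m) = 1] (mod s * m)" using euler_theorem[OF cbsm] .
    then have "[(b ^ totient (s*m)) ^ fact k = 1 ^ fact k] (mod s * m)" by (rule cong_pow)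
    then show ?thesis unfolding E_def by (simp add: power_mult[symmetric] mult.commute)
  qed
  define n where "n = (\<Sum>i<s. b ^ (E * i))"
  have "[n = (\<Sum>i<s. 1)] (mod s * m)" unfolding n_def
  proof (rule cong_sum)
    fix i
    have "[(b ^ E) ^ i = 1 ^ i] (mod s * m)" using bE by (rule cong_pow)
    then show "[b ^ (E * i) = 1] (mod s * m)" by (simp add: power_mult)
  qed
  then have nc: "[n = s] (mod s * m)" by simp
  then have "[n = s] (mod s)" using cong_modulus_mult_nat by blast
  then have sdvd: "s dvd n" by (simp add: cong_def mod_0_imp_dvd)
  have "[n = s] (mod m)" using nc by (metis cong_modulus_mult_nat mult.commute)
  then have "[n = r] (mod m)" using sm by (rule cong_trans)
  then have nmod: "n mod m = r" using assms by (simp add: cong_def)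
  have dsl: "digit_sum (b ^ l) n = s" if "l \<in> {1..k}" for l
  proof -
    have "l dvd fact k" using that by (simp add: dvd_fact)
    then have "l dvd E" unfolding E_def by simp
    then obtain q where q: "E = l * q" by blast
    have "q \<ge> 1" using q Epos by (cases q) auto
    have "b ^ 1 \<le> b ^ l" using assms that by (intro power_increasing) auto
    then have "b ^ l \<ge> 2" using assms by simp
    have "n = (\<Sum>i<s. (b ^ l) ^ (q * i))" unfolding n_def q
      by (simp add: power_mult mult.assoc)
    then show ?thesis using ds_sum[OF \<open>b ^ l \<ge> 2\<close> \<open>q \<ge> 1\<close>] by simp
  qed
  have ds1: "digit_sum b n = s" using dsl[of 1] assms by simp
  have "n \<ge> s" unfolding n_def
  proof -
    have "(\<Sum>i<s. (1::nat)) \<le> (\<Sum>i<s. b ^ (E * i))"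
      by (rule sum_mono) (use assms in simp)
    then show "s \<le> (\<Sum>i<s. b ^ (E * i))" by simp
  qed
  show ?thesis
  proof (intro exI conjI ballI)
    show "s0 \<le> n" using \<open>n \<ge> s\<close> s_ge by simp
    show "n > 0" using \<open>n \<ge> s\<close> s_ge by simp
    show "n mod m = r" by (rule nmod)
    show "digit_sum (b ^ l) n = digit_sum b n" if "l \<in> {1..k}" for l
      using dsl[OF that] ds1 by simp
    show "niven (b ^ l) n" if "l \<in> {1..k}" for l
      unfolding niven_def using dsl[OF that] sdvd \<open>n \<ge> s\<close> s_ge by simp
    show "s0 \<le> digit_sum b n" using ds1 s_ge by simp
  qed
qed

theorem corollary7p1:
  fixes b k m r :: nat
  assumes "b \<ge> 2" and "k \<ge> 1" and "m \<ge> 1" and "coprime m b" and "r < m"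
  shows "infinite {n. n > 0 \<and> n mod m = r \<and> (\<forall>l\<in>{1..k}. niven (b ^ l) n)}
     \<and> (\<forall>s0\<ge>1. \<exists>n. n > 0 \<and> n mod m = r \<and> (\<forall>l\<in>{1..k}. niven (b ^ l) n)
            \<and> (\<forall>l\<in>{1..k}. digit_sum (b ^ l) n = digit_sum b n) \<and> digit_sum b n \<ge> s0)"
proof
  show "infinite {n. n > 0 \<and> n mod m = r \<and> (\<forall>l\<in>{1..k}. niven (b ^ l) n)}"
    unfolding infinite_nat_iff_unbounded_le
  proof
    fix N
    obtain n where "n \<ge> N \<and> n > 0 \<and> n mod m = r \<and> (\<forall>l\<in>{1..k}. niven (b ^ l) n)"
      using main[OF assms, of N] by blast
    then show "\<exists>n\<ge>N. n \<in> {n. n > 0 \<and> n mod m = r \<and> (\<forall>l\<in>{1..k}. niven (b ^ l) n)}"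
      by blast
  qed
  show "\<forall>s0\<ge>1. \<exists>n. n > 0 \<and> n mod m = r \<and> (\<forall>l\<in>{1..k}. niven (b ^ l) n)
            \<and> (\<forall>l\<in>{1..k}. digit_sum (b ^ l) n = digit_sum b n) \<and> digit_sum b n \<ge> s0"
    using main[OF assms] by blast
qed

end
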